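(* Let $n$ and $\delta$ be given, and let $m$ be an integer. Set $$\ell=\frac{2m-n-2\log(1/\delta)}{3},\qquad v=\frac{n-\ell}{2},$$ where the parameters are assumed to be such that $\ell$ and $v$ are nonnegative integers. Consider the following construction, for a chosen representation of $\mathbb{F}_{2^{n-v}}$ as $(n-v)$-bit strings given by coordinates in a basis over $\mathbb{F}_2$ (so that field addition is bitwise XOR). $\mathsf{Gen}(w)$, for $w\in\{0,1\}^n$: 1. Parse $w=a\|b$ with $a\in\{0,1\}^{n-v}$, viewed as an element of $\mathbb{F}_{2^{n-v}}$, and $b\in\{0,1\}^v$. 2. Choose $i$ uniformly from $\mathbb{F}_{2^{n-v}}$. 3. Output $R=[ia]_{v+1}^{n-v}$ (so $|R|=\ell$) and $P=(i,\sigma)$, where $\sigma=[ia]_1^v\oplus b$. $\mathsf{Rep}(w,(i',\sigma'))$: - Output $[i'a]_{v+1}^{n-v}$ if $\sigma'=[i'a]_1^v\oplus b$. - Otherwise output $\perp$. Then there exist a basis of $\mathbb{F}_{2^{n-v}}$ over $\mathbb{F}_2$, a distribution $W$ on $\{0,1\}^n$ with $\mathbf{H}_\infty(W)=m$, and an adversary $A$ with the following property. Sample $w\leftarrow W$, let $(R,P)=\mathsf{Gen}(w)$, and let $P'=A(R,P)$. Then, with probability at least $\delta/2$, both $P'\ne P$ and $\mathsf{Rep}(w,P')\ne\perp$ hold. That is, the post-application robustness of this construction is violated with probability at least $\delta/2$.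
   Context: - $[x]_i^j$ denotes the substring $x_i\cdots x_j$ of a bit string $x$. - $\mathbf{H}_\infty(W)=-\log_2\max_w\Pr[W=w]$. - All logarithms are base 2. - The construction is the robust extractor of Dodis, Katz, Reyzin and Smith (Crypto 2006). - The choice $v=(n-\ell)/2$ with $\ell=(2m-n-2\log(1/\delta))/3$ is the setting that construction prescribes for post-application robustness $\delta$. - The adversary is computationally unbounded and sees both $R$ and $P$. *)

theory Defs
  imports "HOL-Probability.Probability"
begin

text \<open>Bit strings are boolean lists; bit positions are 1-indexed as in the paper.
  substr x i j is the substring x_i ... x_j.\<close>
definition substr :: "bool list \<Rightarrow> nat \<Rightarrow> nat \<Rightarrow> bool list" where
  "substr x i j = take (Suc j - i) (drop (i - 1) x)"

definition bxor :: "bool list \<Rightarrow> bool list \<Rightarrow> bool list" where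
  "bxor x y = map2 (\<noteq>) x y"

definition elem_of :: "'f::field list \<Rightarrow> bool list \<Rightarrow> 'f" where
  "elem_of bs s = (\<Sum>j<length s. if s ! j then bs ! j else 0)"

definition is_F2_basis :: "'f::field list \<Rightarrow> nat \<Rightarrow> bool" where
  "is_F2_basis bs k \<longleftrightarrow> length bs = k \<and> bij_betw (elem_of bs) {s. length s = k} (UNIV :: 'f set)"

definition coords :: "'f::field list \<Rightarrow> nat \<Rightarrow> 'f \<Rightarrow> bool list" where
  "coords bs k x = (THE s. length s = k \<and> elem_of bs s = x)"

definition min_entropy :: "'a pmf \<Rightarrow> real" where
  "min_entropy W = - log 2 (SUP w. pmf W w)"

definition Gen :: "'f::{finite,field} list \<Rightarrow> nat \<Rightarrow> nat \<Rightarrow> bool list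
                     \<Rightarrow> (bool list \<times> ('f \<times> bool list)) pmf" where
  "Gen bs n v w = map_pmf
     (\<lambda>i. let a = elem_of bs (take (n - v) w); b = drop (n - v) w;
              x = coords bs (n - v) (i * a)
          in (substr x (v + 1) (n - v), (i, bxor (substr x 1 v) b)))
     (pmf_of_set (UNIV :: 'f set))"

text \<open>Rep(w, (i', sigma')): None plays the role of the failure symbol.\<close>
definition Rep :: "'f::field list \<Rightarrow> nat \<Rightarrow> nat \<Rightarrow> bool list \<Rightarrow> 'f \<times> bool list
                     \<Rightarrow> bool list option" where
  "Rep bs n v w P' = (case P' of (i', \<sigma>') \<Rightarrow>
     (let a = elem_of bs (take (n - v) w); b = drop (n - v) w;
          x = coords bs (n - v) (i' * a)
      in if \<sigma>' = bxor (substr x 1 v) b then Some (substr x (v + 1) (n - v)) else None))"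

definition attack_success_prob ::
  "'f::{finite,field} list \<Rightarrow> nat \<Rightarrow> nat \<Rightarrow> bool list pmf
     \<Rightarrow> (bool list \<Rightarrow> 'f \<times> bool list \<Rightarrow> 'f \<times> bool list) \<Rightarrow> real" where
  "attack_success_prob bs n v W A =
     measure_pmf.prob
       (do { w \<leftarrow> W; (R, P) \<leftarrow> Gen bs n v w;
             return_pmf (A R P \<noteq> P \<and> Rep bs n v w (A R P) \<noteq> None) })
       {True}"

end

theory Submission
  imports Defs "HOL-Number_Theory.Residues" "HOL-Computational_Algebra.Computational_Algebra"
begin

lemma char2:
  assumes "CARD('f::{finite,field}) = 2^N"
  shows "(x::'f) + x = 0"
proof -
  have "CHAR('f) > 0" by (rule finite_imp_CHAR_pos) simp
  hence p: "prime CHAR('f)" by (rule prime_CHAR_semidom)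
  have "CHAR('f) dvd 2^N" using CHAR_dvd_CARD[where 'a='f] assms by simp
  hence "CHAR('f) dvd 2" using p prime_dvd_power by blast
  hence "CHAR('f) = 2" using p by (simp add: primes_dvd_imp_eq)
  hence "of_nat 2 = (0::'f)" by (metis of_nat_CHAR)
  hence "(1::'f) + 1 = 0" by simp
  hence "(1 + 1) * x = 0" by simp
  thus ?thesis by (simp add: distrib_right)
qed

definition findep :: "'f::field set \<Rightarrow> bool" where
  "findep A \<longleftrightarrow> (\<forall>X\<subseteq>A. sum id X = 0 \<longrightarrow> X = {})"

definition fspan :: "'f::field set \<Rightarrow> 'f set" where
  "fspan A = (\<lambda>X. sum id X) ` Pow A"

lemma sum_symdiff:
  fixes X Y :: "'f::{finite,field} set"
  assumes c2: "\<And>x::'f. x + x = 0"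
  shows "sum id X + sum id Y = sum id ((X - Y) \<union> (Y - X))"
proof -
  have "sum id X = sum id (X - Y) + sum id (X \<inter> Y)"
    by (metis add.commute finite sum.Int_Diff)
  moreover have "sum id Y = sum id (Y - X) + sum id (X \<inter> Y)"
    by (metis add.commute finite sum.Int_Diff inf_commute)
  moreover have "sum id ((X - Y) \<union> (Y - X)) = sum id (X - Y) + sum id (Y - X)"
    by (rule sum.union_disjoint) auto
  ultimately show ?thesis using c2[of "sum id (X \<inter> Y)"]
    by (simp add: algebra_simps)
qed

lemma subset_fspan: "A \<subseteq> fspan A"
proof
  fix a assume "a \<in> A"
  hence "{a} \<in> Pow A" by auto
  moreover have "a = sum id {a}" by simp
  ultimately show "a \<in> fspan A" unfolding fspan_def by blast
qed

lemma findep_insert: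
  fixes A :: "'f::{finite,field} set"
  assumes c2: "\<And>x::'f. x + x = 0"
  assumes "findep A" "y \<notin> fspan A"
  shows "findep (insert y A)"
  unfolding findep_def
proof (intro allI impI)
  fix X assume X: "X \<subseteq> insert y A" "sum id X = 0"
  show "X = {}"
  proof (cases "y \<in> X")
    case True
    have yA: "y \<notin> A" using assms(3) subset_fspan by blast
    have "sum id X = y + sum id (X - {y})"
      using True by (simp add: sum.remove)
    hence "y + sum id (X - {y}) = 0" using X by simp
    hence "y = sum id (X - {y})" using c2[of y]
      by (metis add.assoc add.commute add_0)
    moreover have "X - {y} \<in> Pow A" using X by auto
    ultimately have "y \<in> fspan A" unfolding fspan_def by blast
    thus ?thesis using assms(3) by blast
  next
    case False
    hence "X \<subseteq> A" using X by auto
    thus ?thesis using assms(2) X unfolding findep_def by blast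
  qed
qed

lemma card_fspan:
  fixes A :: "'f::{finite,field} set"
  shows "card (fspan A) \<le> 2 ^ card A"
proof -
  have "card (fspan A) \<le> card (Pow A)" unfolding fspan_def
    by (rule card_image_le) simp
  thus ?thesis by (simp add: card_Pow)
qed

lemma fspan_insert:
  fixes A :: "'f::{finite,field} set"
  shows "fspan (insert u A) \<subseteq> fspan A \<union> (\<lambda>z. u + z) ` fspan A"
proof
  fix x assume "x \<in> fspan (insert u A)"
  then obtain X where X: "X \<subseteq> insert u A" "x = sum id X" unfolding fspan_def by auto
  show "x \<in> fspan A \<union> (\<lambda>z. u + z) ` fspan A"
  proof (cases "u \<in> X")
    case True
    have "x = u + sum id (X - {u})" using True X by (simp add: sum.remove)
    moreover have "sum id (X - {u}) \<in> fspan A" using X unfolding fspan_def by auto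
    ultimately show ?thesis by blast
  next
    case False
    hence "X \<in> Pow A" using X by auto
    thus ?thesis using X unfolding fspan_def by blast
  qed
qed

lemma exists_outside:
  fixes S :: "'f::finite set"
  assumes "card S < CARD('f)"
  shows "\<exists>y. y \<notin> S"
proof (rule ccontr)
  assume "\<not> ?thesis"
  hence "S = UNIV" by auto
  thus False using assms by simp
qed

lemma extend_indep:
  fixes A :: "'f::{finite,field} set"
  assumes c: "CARD('f) = 2^N"
  assumes "findep A" "card A + j \<le> N"
  shows "\<exists>B. A \<inter> B = {} \<and> card B = j \<and> findep (A \<union> B)"
  using assms(3)
proof (induction j)
  case 0
  then show ?case using assms(2) by (intro exI[of _ "{}"]) auto
next
  case (Suc j)
  then obtain B where B: "A \<inter> B = {}" "card B = j" "findep (A \<union> B)" by auto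
  have cAB: "card (A \<union> B) = card A + j" using B by (simp add: card_Un_disjoint)
  have "card (fspan (A \<union> B)) \<le> 2 ^ (card A + j)" using card_fspan[of "A \<union> B"] cAB by simp
  also have "\<dots> < 2 ^ N" using Suc.prems by (intro power_strict_increasing) auto
  finally obtain y where y: "y \<notin> fspan (A \<union> B)" using exists_outside c by metis
  have yAB: "y \<notin> A \<union> B" using y subset_fspan by blast
  have "findep (insert y (A \<union> B))"
    by (rule findep_insert[OF char2[OF c] B(3) y])
  moreover have "card (insert y B) = Suc j" using yAB B by simp
  ultimately show ?case using B yAB by (intro exI[of _ "insert y B"]) auto
qed

lemma card_vimage_mult:
  fixes c :: "'f::{finite,field}"
  assumes "c \<noteq> 0"
  shows "card {u. c * u \<in> S} \<le> card S"
proof -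
  have "{u. c * u \<in> S} \<subseteq> (\<lambda>z. z / c) ` S"
  proof
    fix u assume "u \<in> {u. c * u \<in> S}"
    moreover have "u = (c * u) / c" using assms by simp
    ultimately show "u \<in> (\<lambda>z. z / c) ` S" by blast
  qed
  hence "card {u. c * u \<in> S} \<le> card ((\<lambda>z. z / c) ` S)" by (intro card_mono) auto
  also have "\<dots> \<le> card S" by (rule card_image_le) simp
  finally show ?thesis .
qed

lemma pair_indep:
  fixes d :: "'f::{finite,field}"
  assumes c: "CARD('f) = 2^N" and d: "d \<noteq> 0" "d \<noteq> 1"
  shows "2*j \<le> N \<Longrightarrow> \<exists>us. length us = j \<and> card (set us \<union> (*) d ` set us) = 2*j
             \<and> findep (set us \<union> (*) d ` set us)"
proof (induction j)
  case 0
  then show ?case by (intro exI[of _ "[]"]) (auto simp: findep_def)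
next
  case (Suc j)
  note c2 = char2[OF c]
  from Suc obtain us where us: "length us = j" "card (set us \<union> (*) d ` set us) = 2*j"
     "findep (set us \<union> (*) d ` set us)" by auto
  define A where "A = set us \<union> (*) d ` set us"
  define bad where "bad = fspan A \<union> {u. d * u \<in> fspan A} \<union> {u. (d + 1) * u \<in> fspan A}"
  have cs: "card (fspan A) \<le> 2^(2*j)" using card_fspan[of A] us(2) A_def by simp
  have "d = (d + 1) + 1" using c2[of 1] by (simp add: add.assoc)
  hence d1: "d + 1 \<noteq> 0"
  proof (intro notI)
    assume "d = (d + 1) + 1" "d + 1 = 0"
    hence "d = 1" by simp
    thus False using d(2) by simp
  qed
  have "card bad \<le> card (fspan A) + card {u. d * u \<in> fspan A} + card {u. (d + 1) * u \<in> fspan A}"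
    unfolding bad_def using card_Un_le[of "fspan A \<union> {u. d * u \<in> fspan A}" "{u. (d + 1) * u \<in> fspan A}"]
      card_Un_le[of "fspan A" "{u. d * u \<in> fspan A}"] by linarith
  also have "\<dots> \<le> 3 * 2^(2*j)" using card_vimage_mult[OF d(1), of "fspan A"]
      card_vimage_mult[OF d1, of "fspan A"] cs by linarith
  also have "\<dots> < 2^(2*j+2)" by simp
  also have "\<dots> \<le> 2^N" using Suc.prems by (intro power_increasing) auto
  finally obtain u where u: "u \<notin> bad" using exists_outside c by metis
  have u1: "u \<notin> fspan A" using u bad_def by auto
  have i1: "findep (insert u A)" using findep_insert[OF c2 _ u1] us(3) A_def by simp
  have u2: "d * u \<notin> fspan (insert u A)"
  proof
    assume "d * u \<in> fspan (insert u A)"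
    with fspan_insert have "d * u \<in> fspan A \<or> d * u \<in> (\<lambda>z. u + z) ` fspan A" by blast
    thus False
    proof
      assume "d * u \<in> fspan A" thus False using u bad_def by auto
    next
      assume "d * u \<in> (\<lambda>z. u + z) ` fspan A"
      then obtain z where z: "z \<in> fspan A" "d * u = u + z" by auto
      have "(d + 1) * u = d * u + u" by (simp add: distrib_right)
      also have "\<dots> = z + (u + u)" using z(2) by (simp add: algebra_simps)
      also have "\<dots> = z" by (simp add: c2)
      finally have "(d + 1) * u = z" .
      thus False using u bad_def z by auto
    qed
  qed
  have i2: "findep (insert (d * u) (insert u A))" by (rule findep_insert[OF c2 i1 u2])
  have uA: "u \<notin> A" using u1 subset_fspan by blast
  have duA: "d * u \<notin> insert u A" using u2 subset_fspan by blast
  have eq: "set (us @ [u]) \<union> (*) d ` set (us @ [u]) = insert (d * u) (insert u A)"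
    unfolding A_def by auto
  have "card (insert (d * u) (insert u A)) = 2 * Suc j" using uA duA us(2) A_def by simp
  thus ?case using eq i2 us(1) by (intro exI[of _ "us @ [u]"]) simp
qed

lemma elem_of_set:
  assumes "distinct bs" "length s = length bs"
  shows "elem_of bs s = sum id ((!) bs ` {j\<in>{..<length s}. s!j})"
proof -
  have h: "sum ((!) bs) {j\<in>{..<length s}. s!j} = (\<Sum>j<length s. if s!j then bs!j else 0)"
    by (rule sum.inter_filter) simp
  have "elem_of bs s = sum ((!) bs) {j\<in>{..<length s}. s!j}"
    unfolding elem_of_def by (rule h[symmetric])
  also have "\<dots> = sum id ((!) bs ` {j\<in>{..<length s}. s!j})"
    using assms by (subst sum.reindex) (auto intro!: inj_on_nth)
  finally show ?thesis .
qed

lemma card_bool_lists: "card {s::bool list. length s = N} = 2^N"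
  using card_lists_length_eq[of "UNIV :: bool set" N] by simp

lemma basis_of_indep:
  fixes bs :: "'f::{finite,field} list"
  assumes c: "CARD('f) = 2^N" and bs: "distinct bs" "findep (set bs)" "length bs = N"
  shows "is_F2_basis bs N"
proof -
  note c2 = char2[OF c]
  have inj: "inj_on (elem_of bs) {s. length s = N}"
  proof (rule inj_onI)
    fix s t assume s: "s \<in> {s. length s = N}" and t: "t \<in> {s. length s = N}"
      and eq: "elem_of bs s = elem_of bs t"
    define Is where "Is = {j\<in>{..<length s}. s!j}"
    define It where "It = {j\<in>{..<length t}. t!j}"
    have es: "elem_of bs s = sum id ((!) bs ` Is)" unfolding Is_def
      using s bs by (intro elem_of_set) auto
    have et: "elem_of bs t = sum id ((!) bs ` It)" unfolding It_def
      using t bs by (intro elem_of_set) auto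
    define Xs where "Xs = (!) bs ` Is"
    define Xt where "Xt = (!) bs ` It"
    have "sum id Xs + sum id Xt = 0" using eq es et c2 Xs_def Xt_def by simp
    hence "sum id ((Xs - Xt) \<union> (Xt - Xs)) = 0" using sum_symdiff[OF c2] by metis
    moreover have "(Xs - Xt) \<union> (Xt - Xs) \<subseteq> set bs" unfolding Xs_def Xt_def Is_def It_def
      using s t bs by auto
    ultimately have "(Xs - Xt) \<union> (Xt - Xs) = {}" using bs(2) unfolding findep_def by blast
    hence "Xs = Xt" by blast
    moreover have "inj_on ((!) bs) {..<N}" using bs by (intro inj_on_nth) auto
    moreover have "Is \<subseteq> {..<N}" "It \<subseteq> {..<N}" unfolding Is_def It_def using s t by auto
    ultimately have "Is = It" unfolding Xs_def Xt_def
      using inj_on_image_eq_iff by metis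
    thus "s = t" using s t unfolding Is_def It_def
      by (intro nth_equalityI) (auto simp: set_eq_iff)
  qed
  have "card (elem_of bs ` {s. length s = N}) = CARD('f)"
    using card_image[OF inj] card_bool_lists c by simp
  hence "elem_of bs ` {s. length s = N} = UNIV"
    by (intro card_subset_eq) auto
  thus ?thesis using inj bs unfolding is_F2_basis_def bij_betw_def by simp
qed

lemma basis_ex1:
  assumes "is_F2_basis bs N"
  shows "\<exists>!s. length s = N \<and> elem_of bs s = x"
proof -
  have b: "bij_betw (elem_of bs) {s. length s = N} UNIV" using assms is_F2_basis_def by auto

  have "x \<in> elem_of bs ` {s. length s = N}" using b by (simp add: bij_betw_def)
  then obtain s where "length s = N" "elem_of bs s = x" by auto
  moreover have "\<And>t. length t = N \<Longrightarrow> elem_of bs t = x \<Longrightarrow> t = s"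
    using b calculation unfolding bij_betw_def inj_on_def by auto
  ultimately show ?thesis by blast
qed

lemma coords_elem:
  assumes "is_F2_basis bs N" "length s = N"
  shows "coords bs N (elem_of bs s) = s"
  unfolding coords_def using basis_ex1[OF assms(1)] assms(2) by (intro the1_equality) auto

lemma coords_props:
  assumes "is_F2_basis bs N"
  shows "length (coords bs N x) = N \<and> elem_of bs (coords bs N x) = x"
  unfolding coords_def using theI'[OF basis_ex1[OF assms, of x]] .

lemma elem_of_bxor:
  fixes bs :: "'f::field list"
  assumes c2: "\<And>x::'f. x + x = 0" and "length s = length t"
  shows "elem_of bs (bxor s t) = elem_of bs s + elem_of bs t"
proof -
  have len: "length (bxor s t) = length s" by (simp add: bxor_def assms(2))
  have nth: "bxor s t ! j = (s!j \<noteq> t!j)" if "j < length s" for j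
    using that assms(2) by (simp add: bxor_def)
  have "elem_of bs (bxor s t) = (\<Sum>j<length s. if bxor s t ! j then bs!j else 0)"
    unfolding elem_of_def len ..
  also have "\<dots> = (\<Sum>j<length s. (if s!j then bs!j else 0) + (if t!j then bs!j else 0))"
  proof (rule sum.cong)
    fix j assume "j \<in> {..<length s}"
    hence j: "j < length s" by simp
    show "(if bxor s t ! j then bs!j else 0) = (if s!j then bs!j else 0) + (if t!j then bs!j else 0)"
      by (cases "s!j"; cases "t!j") (simp_all add: nth[OF j] c2)
  qed simp
  finally have "elem_of bs (bxor s t) = (\<Sum>j<length s. (if s!j then bs!j else 0) + (if t!j then bs!j else 0))" .
  thus ?thesis unfolding elem_of_def using assms(2) by (simp add: sum.distrib)
qed

lemma coords_add:
  fixes bs :: "'f::{finite,field} list"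
  assumes c: "CARD('f) = 2^N" and b: "is_F2_basis bs N"
  shows "coords bs N (x + y) = bxor (coords bs N x) (coords bs N y)"
proof -
  have l: "length (bxor (coords bs N x) (coords bs N y)) = N"
    using coords_props[OF b] by (simp add: bxor_def)
  have "elem_of bs (bxor (coords bs N x) (coords bs N y)) = x + y"
    using elem_of_bxor[OF char2[OF c]] coords_props[OF b] by simp
  thus ?thesis using coords_elem[OF b l] by simp
qed

lemma sum_split_add: "(\<Sum>j<a + b. g j) = (\<Sum>j<a. g j) + (\<Sum>j<b. g (a + j))"
  for g :: "nat \<Rightarrow> 'a::comm_monoid_add"
  by (induction b) (simp_all add: add.assoc)

lemma elem_of_prefix:
  assumes "length s \<le> length bs1"
  shows "elem_of (bs1 @ bs2) s = elem_of bs1 s"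
  unfolding elem_of_def using assms by (intro sum.cong) (auto simp: nth_append)

lemma elem_of_append:
  assumes "length s \<le> length bs"
  shows "elem_of bs (s @ t) = elem_of bs s + elem_of (drop (length s) bs) t"
proof -
  have "elem_of bs (s @ t) = (\<Sum>j<length s + length t. if (s @ t) ! j then bs ! j else 0)"
    unfolding elem_of_def by simp
  also have "\<dots> = (\<Sum>j<length s. if (s @ t) ! j then bs ! j else 0)
      + (\<Sum>j<length t. if (s @ t) ! (length s + j) then bs ! (length s + j) else 0)"
    by (rule sum_split_add)
  also have "(\<Sum>j<length s. if (s @ t) ! j then bs ! j else 0) = elem_of bs s"
    unfolding elem_of_def by (intro sum.cong) (auto simp: nth_append)
  also have "(\<Sum>j<length t. if (s @ t) ! (length s + j) then bs ! (length s + j) else 0)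
      = elem_of (drop (length s) bs) t"
    unfolding elem_of_def using assms by (intro sum.cong) auto
  finally show ?thesis .
qed

lemma elem_of_replicate_False: "elem_of bs (replicate k False) = 0"
  unfolding elem_of_def by simp

lemma elem_of_map_mult:
  fixes d :: "'f::field"
  assumes "length s \<le> length bs"
  shows "elem_of (map ((*) d) bs) s = d * elem_of bs s"
  unfolding elem_of_def using assms by (simp add: sum_distrib_left if_distrib cong: if_cong)

lemma length_bxor [simp]: "length (bxor s t) = min (length s) (length t)"
  by (simp add: bxor_def)

lemma bxor_append:
  assumes "length a1 = length b1"
  shows "bxor (a1 @ a2) (b1 @ b2) = bxor a1 b1 @ bxor a2 b2"
  using assms by (simp add: bxor_def zip_append)

lemma bxor_False_right: "length s = k \<Longrightarrow> bxor s (replicate k False) = s"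
  by (intro nth_equalityI) (auto simp: bxor_def)

lemma bxor_False_left: "length s = k \<Longrightarrow> bxor (replicate k False) s = s"
  by (intro nth_equalityI) (auto simp: bxor_def)

lemma take_bxor: "take k (bxor s t) = bxor (take k s) (take k t)"
  by (simp add: bxor_def take_map take_zip)

lemma bxor_swap:
  assumes "length b = length p" "length q = length p"
  shows "bxor (bxor p b) q = bxor (bxor p q) b"
  using assms by (intro nth_equalityI) (auto simp: bxor_def)

lemma attack_wins:
  fixes bs us fs :: "'f::{finite,field} list" and d i :: 'f
  assumes c: "CARD('f) = 2^N" and basis: "is_F2_basis bs N"
    and bsdef: "bs = us @ fs @ map ((*) d) us"
    and lus: "length us = l" and lfs: "length fs = v - l" and lv: "l \<le> v"
    and NN: "N = v + l" and nN: "n - v = N"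
    and d0: "d \<noteq> 0" and i0: "i \<noteq> 0"
    and w: "w = a_s @ bl @ replicate (v - l) False" and la: "length a_s = N" and lb: "length bl = l"
    and Adef: "A = (\<lambda>R (i::'f, \<sigma>). (i + d * i, bxor \<sigma> (take v (coords bs N
                   (d * elem_of bs (replicate l False @ drop l \<sigma> @ R))))))"
  defines "a \<equiv> elem_of bs (take (n - v) w)" and "b \<equiv> drop (n - v) w"
  defines "x \<equiv> coords bs (n - v) (i * a)"
  defines "R \<equiv> substr x (v + 1) (n - v)" and "P \<equiv> (i, bxor (substr x 1 v) b)"
  shows "A R P \<noteq> P \<and> Rep bs n v w (A R P) \<noteq> None"
proof -
  note c2 = char2[OF c]
  have ta: "take (n - v) w = a_s" and tb: "b = bl @ replicate (v - l) False"
    using w la nN unfolding b_def by auto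
  define X where "X = i * elem_of bs a_s"
  have xX: "x = coords bs N X" unfolding x_def X_def a_def using ta nN by simp
  have lx: "length x = N" and ex: "elem_of bs x = X" using coords_props[OF basis] xX by auto
  define x1 where "x1 = take l x"
  define x2 where "x2 = take (v - l) (drop l x)"
  define x3 where "x3 = drop v x"
  have l1: "length x1 = l" and l2: "length x2 = v - l" and l3: "length x3 = l"
    unfolding x1_def x2_def x3_def using lx NN lv by auto
  have tvx: "take v x = x1 @ x2" unfolding x1_def x2_def using lv
    by (metis le_add_diff_inverse take_add)
  have xdec: "x = x1 @ x2 @ x3" using tvx x3_def
    by (metis append.assoc append_take_drop_id)
  have Req: "R = x3" unfolding R_def substr_def x3_def using lx nN NN by simp
  define \<sigma> where "\<sigma> = bxor (take v x) b"
  have Peq: "P = (i, \<sigma>)" unfolding P_def \<sigma>_def substr_def by simp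
  have sig: "\<sigma> = bxor x1 bl @ x2" unfolding \<sigma>_def tvx tb
    using l1 lb l2 by (simp add: bxor_append bxor_False_right)
  have lsig: "length \<sigma> = v" unfolding \<sigma>_def using lx NN tb lb lv by simp
  have dsig: "drop l \<sigma> = x2" using sig l1 lb by simp
  define ch where "ch = replicate l False @ x2 @ x3"
  define e where "e = x1 @ replicate v False"
  have lch: "length ch = N" and le: "length e = N" unfolding ch_def e_def using l2 l3 l1 NN lv by auto
  have "bxor ch e = x1 @ x2 @ x3" unfolding ch_def e_def
  proof -
    have "replicate v False = replicate (v - l) False @ replicate l False"
      using lv by (metis le_add_diff_inverse2 replicate_add)
    hence "bxor (replicate l False @ x2 @ x3) (x1 @ replicate v False)
        = bxor (replicate l False) x1 @ bxor x2 (replicate (v - l) False) @ bxor x3 (replicate l False)"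
      using l1 l2 by (simp add: bxor_append)
    thus "bxor (replicate l False @ x2 @ x3) (x1 @ replicate v False) = x1 @ x2 @ x3"
      using l1 l2 l3 by (simp add: bxor_False_left bxor_False_right)
  qed
  hence "x = bxor ch e" using xdec by simp
  hence Xsplit: "X = elem_of bs ch + elem_of bs e" using ex elem_of_bxor[OF c2] lch le by metis
  have lbs: "length bs = v + l" using bsdef lus lfs lv by simp
  have "elem_of bs e = elem_of bs x1"
    unfolding e_def using elem_of_append[of x1 bs] l1 lbs elem_of_replicate_False by simp
  also have "\<dots> = elem_of us x1" unfolding bsdef using l1 lus by (simp add: elem_of_prefix)
  finally have ee: "elem_of bs e = elem_of us x1" .
  define E2 where "E2 = replicate v False @ x1"
  have lE2: "length E2 = N" unfolding E2_def using l1 NN by simp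
  have dbs: "drop v bs = map ((*) d) us" unfolding bsdef using lus lfs lv by simp
  have "elem_of bs E2 = elem_of (map ((*) d) us) x1"
    unfolding E2_def using elem_of_append[of "replicate v False" bs x1] lbs dbs
    by (simp add: elem_of_replicate_False)
  also have "\<dots> = d * elem_of bs e" using ee elem_of_map_mult[of x1 us d] l1 lus by simp
  finally have eE2: "elem_of bs E2 = d * elem_of bs e" .
  define C where "C = coords bs N (d * elem_of bs ch)"
  have lC: "length C = N" using coords_props[OF basis] C_def by simp
  have dX: "d * X = d * elem_of bs ch + elem_of bs E2" using Xsplit eE2 by (simp add: distrib_left)
  have cdX: "coords bs N (d * X) = bxor C E2"
    unfolding dX C_def coords_add[OF c basis] coords_elem[OF basis lE2] ..
  have tcdX: "take v (coords bs N (d * X)) = take v C"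
    unfolding cdX take_bxor E2_def using lC NN by (simp add: bxor_False_right)
  have AR: "A R P = (i + d * i, bxor \<sigma> (take v C))"
    unfolding Adef Req Peq C_def ch_def using dsig by simp
  have "i + d * i \<noteq> i" using d0 i0 by simp
  hence ne: "A R P \<noteq> P" using AR Peq by (metis fst_conv)
  have ia: "(i + d * i) * elem_of bs (take (n - v) w) = X + d * X"
    unfolding ta X_def by (simp add: algebra_simps)
  have x': "coords bs (n - v) ((i + d * i) * elem_of bs (take (n - v) w)) = bxor x (coords bs N (d * X))"
  proof -
    have "coords bs (n - v) ((i + d * i) * elem_of bs (take (n - v) w)) = coords bs N (X + d * X)"
      using ia nN by simp
    also have "\<dots> = bxor (coords bs N X) (coords bs N (d * X))" by (rule coords_add[OF c basis])
    finally show ?thesis using xX by simp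
  qed
  have "bxor \<sigma> (take v C) = bxor (substr (bxor x (coords bs N (d * X))) 1 v) (drop (n - v) w)"
  proof -
    have "substr (bxor x (coords bs N (d * X))) 1 v = bxor (take v x) (take v C)"
      unfolding substr_def using tcdX by (simp add: take_bxor)
    moreover have "length (take v x) = v" "length (take v C) = v" "length b = v"
      using lx lC NN tb lb lv by auto
    ultimately show ?thesis unfolding \<sigma>_def b_def[symmetric] using bxor_swap by metis
  qed
  hence "Rep bs n v w (i + d * i, bxor \<sigma> (take v C)) \<noteq> None"
    unfolding Rep_def by (simp add: Let_def x')
  hence "Rep bs n v w (A R P) \<noteq> None" using AR by simp
  thus ?thesis using ne by simp
qed

lemma get_basis:
  fixes l v N :: nat
  assumes c: "CARD('f::{finite,field}) = 2^N" and NN: "N = v + l" and lv: "l \<le> v"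
  shows "\<exists>(d::'f) us fs. d \<noteq> 0 \<and> length us = l \<and> length fs = v - l
            \<and> is_F2_basis (us @ fs @ map ((*) d) us) N"
proof -
  have "\<exists>(d::'f) us. d \<noteq> 0 \<and> length us = l \<and> card (set us \<union> (*) d ` set us) = 2*l
            \<and> findep (set us \<union> (*) d ` set us)"
  proof (cases "l = 0")
    case True
    thus ?thesis by (intro exI[of _ 1] exI[of _ "[]"]) (auto simp: findep_def)
  next
    case False
    hence "N \<ge> 2" using NN lv by simp
    hence "(2::nat)^2 \<le> 2^N" by (intro power_increasing) auto
    hence "card {0::'f, 1} < CARD('f)" using c card_insert_le[of "{1::'f}" 0] by simp
    then obtain d :: 'f where "d \<notin> {0, 1}" using exists_outside by metis
    hence d: "d \<noteq> 0" "d \<noteq> 1" by auto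
    have "2 * l \<le> N" using NN lv by simp
    from pair_indep[OF c d this] show ?thesis using d by blast
  qed
  then obtain d :: 'f and us where d: "d \<noteq> 0" and lus: "length us = l"
    and cA: "card (set us \<union> (*) d ` set us) = 2*l" and iA: "findep (set us \<union> (*) d ` set us)"
    by blast
  define A where "A = set us \<union> (*) d ` set us"
  have "card A + (v - l) \<le> N" using cA A_def NN lv by simp
  from extend_indep[OF c _ this] iA A_def obtain B where
    B: "A \<inter> B = {}" "card B = v - l" "findep (A \<union> B)" by auto
  obtain fs where fs: "set fs = B" "distinct fs" using finite_distinct_list[of B] by auto
  have lfs: "length fs = v - l" using fs B distinct_card by metis
  define bs where "bs = us @ fs @ map ((*) d) us"
  have sbs: "set bs = A \<union> B" unfolding bs_def A_def using fs by auto
  have lbs: "length bs = N" unfolding bs_def using lus lfs NN lv by simp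
  have "card (set bs) = N" unfolding sbs using B cA A_def NN lv
    by (simp add: card_Un_disjoint)
  hence "distinct bs" using lbs card_distinct by metis
  hence "is_F2_basis bs N" using basis_of_indep[OF c] sbs B lbs by simp
  thus ?thesis using d lus lfs bs_def by blast
qed

theorem theorem3:
  fixes n l v :: nat and m :: int and \<delta> :: real
  assumes "0 < \<delta>" and "\<delta> < 1"
    and "m \<le> int n"
    and "real l = (2 * real_of_int m - real n - 2 * log 2 (1 / \<delta>)) / 3"
    and "real v = (real n - real l) / 2"
    and "CARD('f::{finite,field}) = 2 ^ (n - v)"
  shows "\<exists>(bs :: 'f list) (W :: bool list pmf) A.
           is_F2_basis bs (n - v)
         \<and> set_pmf W \<subseteq> {w. length w = n}
         \<and> min_entropy W = real_of_int m
         \<and> attack_success_prob bs n v W A \<ge> \<delta> / 2"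
proof -
  have "real n = 2 * real v + real l" using assms(5) by (simp add: field_simps)
  hence "real n = real (2 * v + l)" by simp
  hence n_eq: "n = 2 * v + l" using of_nat_eq_iff by blast
  define N where "N = n - v"
  have NN: "N = v + l" using n_eq N_def by simp
  define L where "L = m - int v - 2 * int l"
  have Lr: "log 2 (1 / \<delta>) = real_of_int L" unfolding L_def using assms(4) n_eq by simp
  have "1 < 1 / \<delta>" using assms(1,2) by (simp add: less_divide_eq)
  hence "0 < log 2 (1 / \<delta>)" using assms(1) by simp
  hence L0: "L > 0" using Lr by simp
  have mL: "m = int v + 2 * int l + L" using L_def by simp
  have lv: "l \<le> v" using mL assms(3) n_eq L0 by simp
  have natm: "nat m = v + 2 * l + nat L" using mL L0 by simp
  have "1 / \<delta> = 2 powr (log 2 (1 / \<delta>))" using assms(1) by simp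
  also have "\<dots> = 2 powr real (nat L)" unfolding Lr using L0 by simp
  also have "\<dots> = 2 ^ nat L" by (rule powr_realpow) simp
  finally have delta: "\<delta> = 1 / 2 ^ nat L" using assms(1) by (simp add: field_simps)
  have c: "CARD('f) = 2 ^ N" using assms(6) N_def by simp
  obtain d :: 'f and us fs where d: "d \<noteq> 0" and lus: "length us = l" and lfs: "length fs = v - l"
    and basis: "is_F2_basis (us @ fs @ map ((*) d) us) N"
    using get_basis[OF c NN lv] by blast
  define bs where "bs = us @ fs @ map ((*) d) us"
  define A where "A = (\<lambda>R (i::'f, \<sigma>). (i + d * i, bxor \<sigma> (take v (coords bs N
                   (d * elem_of bs (replicate l False @ drop l \<sigma> @ R))))))"
  define G where "G = (\<lambda>(a::bool list, b). a @ b @ replicate (v - l) False) `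
      ({s. length s = N} \<times> {s. length s = l})"
  have injG: "inj_on (\<lambda>(a::bool list, b). a @ b @ replicate (v - l) False)
      ({s. length s = N} \<times> {s. length s = l})"
  proof (rule inj_onI)
    fix p q assume p: "p \<in> {s::bool list. length s = N} \<times> {s. length s = l}"
      and q: "q \<in> {s::bool list. length s = N} \<times> {s. length s = l}"
      and eq: "(\<lambda>(a::bool list, b). a @ b @ replicate (v - l) False) p
             = (\<lambda>(a::bool list, b). a @ b @ replicate (v - l) False) q"
    obtain a1 b1 where p': "p = (a1, b1)" by (cases p)
    obtain a2 b2 where q': "q = (a2, b2)" by (cases q)
    have la: "length a1 = length a2" "length b1 = length b2" using p q p' q' by auto
    have "a1 @ (b1 @ replicate (v - l) False) = a2 @ (b2 @ replicate (v - l) False)"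
      using eq p' q' by simp
    hence "a1 = a2 \<and> b1 @ replicate (v - l) False = b2 @ replicate (v - l) False"
      using append_eq_append_conv la(1) by blast
    hence "a1 = a2 \<and> b1 = b2" by simp
    thus "p = q" using p' q' by simp
  qed
  have cardG: "card G = 2 ^ (N + l)" unfolding G_def card_image[OF injG]
    by (simp add: card_cartesian_product card_bool_lists power_add)
  define U where "U = {w :: bool list. length w = n}"
  have GU: "G \<subseteq> U" unfolding G_def U_def using NN n_eq lv by auto
  have finU: "finite U" unfolding U_def using finite_lists_length_eq[of "UNIV :: bool set" n] by simp
  have cardU: "card U = 2 ^ n" unfolding U_def by (rule card_bool_lists)
  have le1: "(2::nat) ^ (N + l) \<le> 2 ^ nat m" using natm NN by (intro power_increasing) auto
  have le2: "(2::nat) ^ nat m \<le> 2 ^ n" using assms(3) L0 by (intro power_increasing) auto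
  have dm: "2 ^ nat m - 2 ^ (N + l) \<le> 2 ^ n - (2::nat) ^ (N + l)" using le2 by (rule diff_le_mono)
  have "card (U - G) = 2 ^ n - 2 ^ (N + l)"
    using card_Diff_subset[of G U] GU finU cardG cardU finite_subset[OF GU finU] by simp
  hence "2 ^ nat m - 2 ^ (N + l) \<le> card (U - G)" using dm by simp
  then obtain T where T: "T \<subseteq> U - G" "card T = 2 ^ nat m - 2 ^ (N + l)" "finite T"
    by (rule obtain_subset_with_card_n)
  define S where "S = G \<union> T"
  have finS: "finite S" unfolding S_def using finite_subset[OF GU finU] T by simp
  have "G \<inter> T = {}" using T by blast
  hence "card S = card G + card T" unfolding S_def
    using card_Un_disjoint[of G T] T finite_subset[OF GU finU] by simp
  hence cardS: "card S = 2 ^ nat m" using T(2) cardG le1 by simp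
  have SU: "S \<subseteq> U" unfolding S_def using GU T by auto
  have Sne: "S \<noteq> {}" using cardS by auto
  define W where "W = pmf_of_set S"
  have setW: "set_pmf W \<subseteq> {w. length w = n}" unfolding W_def using Sne finS SU U_def by simp
  have "(SUP w. pmf W w) = 1 / real (card S)"
  proof -
    obtain w0 where w0: "w0 \<in> S" using Sne by auto
    hence "pmf W w0 = 1 / real (card S)" unfolding W_def using Sne finS by simp
    hence "1 / real (card S) \<in> range (pmf W)" by (metis rangeI)
    moreover have "y \<le> 1 / real (card S)" if "y \<in> range (pmf W)" for y
    proof -
      obtain z where z: "y = pmf W z" using \<open>y \<in> range (pmf W)\<close> by auto
      show ?thesis unfolding z W_def using Sne finS by (cases "z \<in> S") simp_all
    qed
    ultimately show ?thesis by (rule cSup_eq_maximum)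
  qed
  hence "min_entropy W = - log 2 (1 / 2 ^ nat m)" unfolding min_entropy_def cardS by simp
  also have "\<dots> = real (nat m)" by (simp add: log_divide log_nat_power)
  also have "\<dots> = real_of_int m" using mL L0 by simp
  finally have ment: "min_entropy W = real_of_int m" .
  define g where "g = (\<lambda>w (i::'f). let a = elem_of bs (take (n - v) w); b = drop (n - v) w;
              x = coords bs (n - v) (i * a)
          in (substr x (v + 1) (n - v), (i, bxor (substr x 1 v) b)))"
  have Gen_eq: "\<And>w. Gen bs n v w = map_pmf (g w) (pmf_of_set UNIV)" unfolding Gen_def g_def ..
  define H where "H = (\<lambda>w. \<lambda>(R, P). return_pmf (A R P \<noteq> P \<and> Rep bs n v w (A R P) \<noteq> None))"
  have win: "H w (g w i) = return_pmf True" if "w \<in> G" "i \<noteq> 0" for w i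
  proof -
    from that obtain a_s bl where w: "w = a_s @ bl @ replicate (v-l) False" "length a_s = N"
      "length bl = l" unfolding G_def by auto
    from attack_wins[OF c basis[folded bs_def] bs_def lus lfs lv NN N_def[symmetric] d \<open>i \<noteq> 0\<close> w A_def]
    show "H w (g w i) = return_pmf True" unfolding H_def g_def Let_def by simp
  qed
  have c2: "2 \<le> CARD('f)"
    using card_mono[of "UNIV :: 'f set" "{0, 1}"] by simp
  have inner: "pmf (bind_pmf (Gen bs n v w) (H w)) True \<ge> 1 / 2" if wG: "w \<in> G" for w
  proof -
    have "pmf (bind_pmf (Gen bs n v w) (H w)) True
        = (\<Sum>i\<in>UNIV. pmf (H w (g w i)) True) / CARD('f)"
      unfolding Gen_eq bind_map_pmf pmf_bind by (subst integral_pmf_of_set) auto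
    moreover have "(\<Sum>i\<in>UNIV - {0}. pmf (H w (g w i)) True) \<le> (\<Sum>i\<in>UNIV. pmf (H w (g w i)) True)"
      by (rule sum_mono2) auto
    moreover have "(\<Sum>i\<in>UNIV - {0}. pmf (H w (g w i)) True) = real (CARD('f) - 1)"
    proof -
      have "(\<Sum>i\<in>UNIV - {0}. pmf (H w (g w i)) True) = (\<Sum>i\<in>UNIV - {0::'f}. 1)"
        using win[OF wG] by (intro sum.cong) auto
      thus ?thesis by simp
    qed
    ultimately have "pmf (bind_pmf (Gen bs n v w) (H w)) True \<ge> real (CARD('f) - 1) / CARD('f)"
      by (simp add: divide_right_mono)
    moreover have "real (CARD('f) - 1) / CARD('f) \<ge> 1 / 2" using c2
      by (simp add: field_simps of_nat_diff)
    ultimately show ?thesis by linarith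
  qed
  have "attack_success_prob bs n v W A = pmf (bind_pmf W (\<lambda>w. bind_pmf (Gen bs n v w) (H w))) True"
    unfolding attack_success_prob_def H_def by (simp add: measure_pmf_single)
  also have "\<dots> = (\<Sum>w\<in>S. pmf (bind_pmf (Gen bs n v w) (H w)) True) / card S"
    unfolding W_def pmf_bind using Sne finS by (simp add: integral_pmf_of_set)
  finally have pr: "attack_success_prob bs n v W A = (\<Sum>w\<in>S. pmf (bind_pmf (Gen bs n v w) (H w)) True) / card S" .
  have "(\<Sum>w\<in>G. 1 / 2) \<le> (\<Sum>w\<in>G. pmf (bind_pmf (Gen bs n v w) (H w)) True)"
    using inner by (intro sum_mono) auto
  also have "\<dots> \<le> (\<Sum>w\<in>S. pmf (bind_pmf (Gen bs n v w) (H w)) True)"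
    using finS S_def by (intro sum_mono2) auto
  finally have "real (card G) / 2 \<le> (\<Sum>w\<in>S. pmf (bind_pmf (Gen bs n v w) (H w)) True)" by simp
  hence "real (card G) / 2 / card S \<le> (\<Sum>w\<in>S. pmf (bind_pmf (Gen bs n v w) (H w)) True) / card S"
    by (rule divide_right_mono) simp
  hence "real (card G) / 2 / card S \<le> attack_success_prob bs n v W A"
    unfolding pr .
  moreover have "real (card G) / 2 / card S = \<delta> / 2"
  proof -
    have "nat m = (N + l) + nat L" using natm NN by simp
    hence "card S = 2 ^ ((N + l) + nat L)" using cardS by simp
    hence "card S = 2 ^ (N + l) * 2 ^ nat L" by (simp only: power_add)
    thus ?thesis using cardG delta by simp
  qed
  ultimately have "attack_success_prob bs n v W A \<ge> \<delta> / 2" by simp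
  thus ?thesis using basis bs_def setW ment N_def by blast
qed

end
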